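(* Every magma satisfying $\mathrm{x}\simeq\mathrm{x}\diamond((\mathrm{y}\diamond\mathrm{z})\diamond(\mathrm{x}\diamond\mathrm{z}))$ also satisfies the right idempotence law $\mathrm{x}\diamond\mathrm{y}\simeq(\mathrm{x}\diamond\mathrm{y})\diamond\mathrm{y}$.
   Context: A magma is a set with a binary operation $\diamond$; it satisfies a law if the identity holds for all assignments of variables. *)

theory Defs
  imports Main
begin

end

theory Submission
  imports Defs
begin

theorem mainTheorem10:
  fixes op :: "'a \<Rightarrow> 'a \<Rightarrow> 'a"
  assumes "\<And>x y z. x = op x (op (op y z) (op x z))"
  shows "\<And>x y. op x y = op (op x y) y"
  by (metis assms)

end
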